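(* Let $N=\{1,\dots,n\}$ and let $\Psi_{TU}$ be the StatisticalSolution problem with instance space $\mathcal X=2^N$ (coalitions), game class $\mathbb G=\{v:2^N\to\mathbb R_{+}\}$ (all TU cooperative games on $N$), solution space $\mathbb S=\mathbb R^n$ (payoff vectors), and local loss $\lambda(S,v,\vec x)=1$ if $v(S)>\sum_{i\in S}x_i$ (i.e. $S$ blocks $\vec x$) and $\lambda(S,v,\vec x)=0$ otherwise. Then $\mathit{Sd}(\Psi_{TU})\le n$; in particular the solution dimension of TU cooperative games is $O(n)$.
   Context: A StatisticalSolution problem is a tuple $\Psi=(\mathcal X,\mathcal Y,\mathbb G,\mathbb S,\lambda)$ with $\mathbb G\subseteq\mathcal Y^{\mathcal X}$ a class of games, $\mathbb S$ a solution space and $\lambda:\mathcal X\times\mathbb G\times\mathbb S\to\{0,1\}$ a local loss. A set $C\subseteq\mathcal X$ is S-shattered in $\Psi$ if there exists a game $g\in\mathbb G$ such that for every $b:C\to\{0,1\}$ there is $s\in\mathbb S$ (depending on $b$) with $\lambda(x,g,s)=b(x)$ for all $x\in C$. The solution dimension $\mathit{Sd}(\Psi)$ is the largest size of an S-shattered set. *)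

theory Defs
  imports Main "HOL-Library.Extended_Nat"
begin

definition s_shattered ::
  "'g set \<Rightarrow> 's set \<Rightarrow> ('x \<Rightarrow> 'g \<Rightarrow> 's \<Rightarrow> nat) \<Rightarrow> 'x set \<Rightarrow> bool" where
  "s_shattered G S lam C \<longleftrightarrow>
     (\<exists>g\<in>G. \<forall>b::'x \<Rightarrow> nat. (\<forall>x\<in>C. b x \<in> {0,1}) \<longrightarrow>
        (\<exists>s\<in>S. \<forall>x\<in>C. lam x g s = b x))"

definition solution_dim ::
  "'x set \<Rightarrow> 'g set \<Rightarrow> 's set \<Rightarrow> ('x \<Rightarrow> 'g \<Rightarrow> 's \<Rightarrow> nat) \<Rightarrow> enat" where
  "solution_dim X G S lam =
     (SUP C \<in> {C. C \<subseteq> X \<and> s_shattered G S lam C}.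
        (if finite C then enat (card C) else \<infinity>))"

definition tu_players :: "nat \<Rightarrow> nat set" where
  "tu_players n = {1..n}"

definition tu_instances :: "nat \<Rightarrow> nat set set" where
  "tu_instances n = Pow (tu_players n)"

text \<open>Games v : 2^N -> R_+ (values off 2^N fixed to 0).\<close>
definition tu_games :: "nat \<Rightarrow> (nat set \<Rightarrow> real) set" where
  "tu_games n = {v. (\<forall>T. T \<subseteq> tu_players n \<longrightarrow> v T \<ge> 0) \<and>
                    (\<forall>T. \<not> T \<subseteq> tu_players n \<longrightarrow> v T = 0)}"

text \<open>Payoff vectors in R^n, as functions on N (zero outside N).\<close>
definition tu_solutions :: "nat \<Rightarrow> (nat \<Rightarrow> real) set" where
  "tu_solutions n = {x. \<forall>i. i \<notin> tu_players n \<longrightarrow> x i = 0}"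

definition tu_loss :: "nat set \<Rightarrow> (nat set \<Rightarrow> real) \<Rightarrow> (nat \<Rightarrow> real) \<Rightarrow> nat" where
  "tu_loss T v x = (if v T > (\<Sum>i\<in>T. x i) then 1 else 0)"

end

theory Submission
  imports Defs "HOL-Library.Function_Algebras"
begin

interpretation fv: vector_space "\<lambda>(c::real) (f::nat\<Rightarrow>real) i. c * f i"
  by unfold_locales (simp_all add: algebra_simps fun_eq_iff)

definition ind :: "nat set \<Rightarrow> nat \<Rightarrow> real" where
  "ind S = (\<lambda>i. if i \<in> S then 1 else 0)"

lemma inj_ind: "inj ind"
proof (rule injI)
  fix x y assume h: "ind x = ind y"
  show "x = y"
  proof (rule set_eqI)
    fix i show "i \<in> x \<longleftrightarrow> i \<in> y" using fun_cong[OF h, of i] by (auto simp: ind_def split: if_splits)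
  qed
qed

lemma sum_fun_app: "(\<Sum>x\<in>A. (f x :: nat \<Rightarrow> real)) i = (\<Sum>x\<in>A. f x i)"
  by (induction A rule: infinite_finite_induct) auto

lemma ind_sum: "finite S \<Longrightarrow> ind S = (\<Sum>i\<in>S. ind {i})"
  by (rule ext) (simp add: sum_fun_app ind_def)

lemma sum_ind_lin:
  assumes "finite N" "S \<subseteq> N"
  shows "(\<Sum>i\<in>S. x i) = (\<Sum>i\<in>N. x i * ind S i)"
proof -
  have "(\<Sum>i\<in>N. x i * ind S i) = (\<Sum>i\<in>S. x i * ind S i)"
    using assms by (intro sum.mono_neutral_right) (auto simp: ind_def)
  also have "\<dots> = (\<Sum>i\<in>S. x i)" by (simp add: ind_def)
  finally show ?thesis by simp
qed

lemma key:
  assumes C: "C \<subseteq> Pow {1..n}"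
    and sh: "s_shattered (tu_games n) (tu_solutions n) tu_loss C"
  shows "card C \<le> n"
proof -
  let ?N = "{1..n::nat}"
  have finC: "finite C" using C finite_subset by (metis finite_Pow_iff finite_atLeastAtMost)
  let ?E = "(\<lambda>i. ind {i}) ` ?N"
  have finE: "finite ?E" by simp
  have cardE: "card ?E \<le> n" using card_image_le[of ?N "\<lambda>i. ind {i}"] by simp
  have spanC: "ind ` C \<subseteq> fv.span ?E"
  proof
    fix w assume "w \<in> ind ` C"
    then obtain S where S: "S \<in> C" "w = ind S" by auto
    have SN: "S \<subseteq> ?N" using S C by auto
    hence fS: "finite S" using finite_subset by blast
    have "(\<Sum>i\<in>S. ind {i}) \<in> fv.span ?E"
      by (rule fv.span_sum) (use SN in \<open>auto intro: fv.span_base\<close>)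
    thus "w \<in> fv.span ?E" using S ind_sum[OF fS] by simp
  qed
  have cardIC: "card (ind ` C) = card C"
    using inj_ind by (meson card_image inj_on_subset subset_UNIV)
  show ?thesis
  proof (cases "fv.dependent (ind ` C)")
    case False
    then have "card (ind ` C) \<le> card ?E"
      using fv.independent_span_bound[OF finE _ spanC] by blast
    thus ?thesis using cardIC cardE by simp
  next
    case True
    then obtain u where u: "\<exists>w\<in>ind ` C. u w \<noteq> 0"
      and us: "(\<Sum>w\<in>ind ` C. (\<lambda>i. u w * w i)) = 0"
      using fv.dependent_finite[of "ind ` C"] finC by auto
    define a where "a S = u (ind S)" for S
    have ex: "\<exists>S\<in>C. a S \<noteq> 0" using u a_def by auto
    have us2: "(\<Sum>S\<in>C. (\<lambda>i. a S * ind S i)) = 0"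
      using us inj_ind unfolding a_def
      by (subst (asm) sum.reindex) (auto intro: inj_on_subset)
    have lin: "(\<Sum>S\<in>C. a S * (\<Sum>i\<in>S. x i)) = 0" for x :: "nat \<Rightarrow> real"
    proof -
      have "(\<Sum>S\<in>C. a S * (\<Sum>i\<in>S. x i)) = (\<Sum>S\<in>C. a S * (\<Sum>i\<in>?N. x i * ind S i))"
        using C by (intro sum.cong refl) (auto simp: sum_ind_lin)
      also have "\<dots> = (\<Sum>i\<in>?N. x i * (\<Sum>S\<in>C. a S * ind S i))"
      proof -
        have "(\<Sum>S\<in>C. a S * (\<Sum>i\<in>?N. x i * ind S i)) = (\<Sum>S\<in>C. \<Sum>i\<in>?N. x i * (a S * ind S i))"
          by (simp add: sum_distrib_left mult_ac)
        also have "\<dots> = (\<Sum>i\<in>?N. \<Sum>S\<in>C. x i * (a S * ind S i))"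
          by (rule sum.swap)
        also have "\<dots> = (\<Sum>i\<in>?N. x i * (\<Sum>S\<in>C. a S * ind S i))"
          by (simp add: sum_distrib_left)
        finally show ?thesis .
      qed
      also have "\<dots> = 0"
      proof -
        have "(\<Sum>S\<in>C. a S * ind S i) = 0" for i
          using fun_cong[OF us2, of i] by (simp add: sum_fun_app)
        thus ?thesis by simp
      qed
      finally show ?thesis .
    qed
    obtain v where v: "v \<in> tu_games n" and shv: "\<And>b::nat set \<Rightarrow> nat. (\<forall>S\<in>C. b S \<in> {0,1}) \<Longrightarrow>
        (\<exists>x\<in>tu_solutions n. \<forall>S\<in>C. tu_loss S v x = b S)"
      using sh unfolding s_shattered_def by blast
    have "\<exists>x\<in>tu_solutions n. \<forall>S\<in>C. tu_loss S v x = (\<lambda>S. if a S > 0 then 1 else 0) S"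
      by (rule shv) simp
    then obtain x1 where x1: "\<forall>S\<in>C. tu_loss S v x1 = (if a S > 0 then 1 else 0)" by blast
    have "\<exists>x\<in>tu_solutions n. \<forall>S\<in>C. tu_loss S v x = (\<lambda>S. if a S < 0 then 1 else 0) S"
      by (rule shv) simp
    then obtain x2 where x2: "\<forall>S\<in>C. tu_loss S v x2 = (if a S < 0 then 1 else 0)" by blast
    have le1: "a S * (\<Sum>i\<in>S. x1 i) \<le> a S * v S" if "S \<in> C" for S
    proof -
      have "(a S > 0 \<longrightarrow> v S > (\<Sum>i\<in>S. x1 i)) \<and> (a S \<le> 0 \<longrightarrow> \<not> v S > (\<Sum>i\<in>S. x1 i))"
      proof -
        have e: "tu_loss S v x1 = (if a S > 0 then 1 else 0)" using x1 that by blast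
        show ?thesis
        proof (cases "a S > 0")
          case True thus ?thesis using e by (simp add: tu_loss_def split: if_splits)
        next
          case False thus ?thesis using e by (simp add: tu_loss_def split: if_splits)
        qed
      qed
      thus ?thesis
        by (cases "a S > 0") (simp_all add: mult_left_mono mult_left_mono_neg)
    qed
    have lt1: "a S * (\<Sum>i\<in>S. x1 i) < a S * v S" if "S \<in> C" "a S > 0" for S
    proof -
      have e: "tu_loss S v x1 = 1" using x1 that by simp
      thus ?thesis using that by (simp add: tu_loss_def split: if_splits)
    qed
    have le2: "a S * v S \<le> a S * (\<Sum>i\<in>S. x2 i)" if "S \<in> C" for S
    proof -
      have "(a S < 0 \<longrightarrow> v S > (\<Sum>i\<in>S. x2 i)) \<and> (a S \<ge> 0 \<longrightarrow> \<not> v S > (\<Sum>i\<in>S. x2 i))"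
      proof -
        have e: "tu_loss S v x2 = (if a S < 0 then 1 else 0)" using x2 that by blast
        show ?thesis
        proof (cases "a S < 0")
          case True thus ?thesis using e by (simp add: tu_loss_def split: if_splits)
        next
          case False thus ?thesis using e by (simp add: tu_loss_def split: if_splits)
        qed
      qed
      thus ?thesis
        by (cases "a S < 0") (simp_all add: mult_left_mono mult_left_mono_neg)
    qed
    have lt2: "a S * v S < a S * (\<Sum>i\<in>S. x2 i)" if "S \<in> C" "a S < 0" for S
    proof -
      have e: "tu_loss S v x2 = 1" using x2 that by simp
      thus ?thesis using that by (simp add: tu_loss_def mult_less_cancel_left split: if_splits)
    qed
    have s1: "(\<Sum>S\<in>C. a S * (\<Sum>i\<in>S. x1 i)) \<le> (\<Sum>S\<in>C. a S * v S)"
      using le1 by (intro sum_mono) auto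
    have s2: "(\<Sum>S\<in>C. a S * v S) \<le> (\<Sum>S\<in>C. a S * (\<Sum>i\<in>S. x2 i))"
      using le2 by (intro sum_mono) auto
    from ex obtain S0 where S0: "S0 \<in> C" "a S0 \<noteq> 0" by auto
    show ?thesis
    proof (cases "a S0 > 0")
      case True
      have "(\<Sum>S\<in>C. a S * (\<Sum>i\<in>S. x1 i)) < (\<Sum>S\<in>C. a S * v S)"
        by (rule sum_strict_mono_ex1[OF finC]) (use le1 lt1[OF S0(1) True] S0(1) in blast)+
      thus ?thesis using s2 lin[of x1] lin[of x2] by simp
    next
      case False
      hence neg: "a S0 < 0" using S0 by simp
      have "(\<Sum>S\<in>C. a S * v S) < (\<Sum>S\<in>C. a S * (\<Sum>i\<in>S. x2 i))"
        by (rule sum_strict_mono_ex1[OF finC]) (use le2 lt2[OF S0(1) neg] S0(1) in blast)+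
      thus ?thesis using s1 lin[of x1] lin[of x2] by simp
    qed
  qed
qed

theorem mainTheorem3:
  fixes n :: nat
  shows "solution_dim (tu_instances n) (tu_games n) (tu_solutions n) tu_loss \<le> enat n"
  unfolding solution_dim_def
proof (rule SUP_least)
  fix C assume "C \<in> {C. C \<subseteq> tu_instances n \<and> s_shattered (tu_games n) (tu_solutions n) tu_loss C}"
  hence C: "C \<subseteq> Pow {1..n}" and sh: "s_shattered (tu_games n) (tu_solutions n) tu_loss C"
    by (auto simp: tu_instances_def tu_players_def)
  have "finite C" using C by (metis finite_Pow_iff finite_atLeastAtMost finite_subset)
  thus "(if finite C then enat (card C) else \<infinity>) \<le> enat n"
    using key[OF C sh] by simp
qed

end
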